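(* Let $k\ge2$ be even, $\alpha_1,\dots,\alpha_k$ positive integers, $G=C(\alpha_1,\dots,\alpha_k)$, and let $m(G)$ be the number of distinct Laplacian eigenvalues of $G$. Then $k\le m(G)\le 2k-1$.
   Context: $C(\alpha_1,\dots,\alpha_k)$ is defined recursively by $C(\alpha_1)=\overline{K_{\alpha_1}}$ (edgeless graph) and $C(\alpha_1,\dots,\alpha_i)=\overline{C(\alpha_1,\dots,\alpha_{i-1})\cup K_{\alpha_i}}$ for $i=2,\dots,k$ (disjoint union, then complement). Equivalently for $k$ even, with $\pi_i$ the $\alpha_i$ vertices introduced at step $i$: $\pi_i$ is a clique for $i$ odd, independent for $i$ even, and for $i<j$ vertices of $\pi_i,\pi_j$ are adjacent iff $j$ is even. Laplacian eigenvalues are those of $L=D-A$. *)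

theory Defs
  imports "Jordan_Normal_Form.Char_Poly"
begin

text \<open>The graph C(alpha_1,...,alpha_k) is encoded on the vertex set {0..<sum alpha}.
  The vertices introduced at step i+1 (0-based i) are those in
  {pre alpha i ..< pre alpha (i+1)}, where pre alpha i = sum of the first i entries.\<close>

definition pre :: "nat list \<Rightarrow> nat \<Rightarrow> nat" where
  "pre \<alpha> i = sum_list (take i \<alpha>)"

text \<open>C_adj alpha i u v: adjacency in the graph C(alpha_1,...,alpha_i) built after i steps
  (C_adj alpha 0 is the empty graph on no vertices). Step i+1: disjoint union of the
  current graph with a clique on the new vertices, then complement.\<close>

primrec C_adj :: "nat list \<Rightarrow> nat \<Rightarrow> nat \<Rightarrow> nat \<Rightarrow> bool" where
  "C_adj \<alpha> 0 u v = False"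
| "C_adj \<alpha> (Suc i) u v =
     (u < pre \<alpha> (Suc i) \<and> v < pre \<alpha> (Suc i) \<and> u \<noteq> v \<and>
      \<not> (C_adj \<alpha> i u v \<or> (pre \<alpha> i \<le> u \<and> pre \<alpha> i \<le> v)))"

definition C_graph_adj :: "nat list \<Rightarrow> nat \<Rightarrow> nat \<Rightarrow> bool" where
  "C_graph_adj \<alpha> = C_adj \<alpha> (length \<alpha>)"

definition num_vertices :: "nat list \<Rightarrow> nat" where
  "num_vertices \<alpha> = sum_list \<alpha>"

definition laplacian :: "nat \<Rightarrow> (nat \<Rightarrow> nat \<Rightarrow> bool) \<Rightarrow> real mat" where
  "laplacian n adj = mat n n (\<lambda>(u, v).
     (if u = v then real (card {w. w < n \<and> adj u w}) else 0)
     - (if adj u v then 1 else 0))"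

definition num_distinct_lap_eigs :: "nat \<Rightarrow> (nat \<Rightarrow> nat \<Rightarrow> bool) \<Rightarrow> nat" where
  "num_distinct_lap_eigs n adj = card {x :: real. eigenvalue (laplacian n adj) x}"

end

theory Submission
  imports Defs
begin

lemma pre_0[simp]: "pre \<alpha> 0 = 0" by (simp add: pre_def)

lemma pre_Suc: "b < length \<alpha> \<Longrightarrow> pre \<alpha> (Suc b) = pre \<alpha> b + \<alpha> ! b"
  by (simp add: pre_def take_Suc_conv_app_nth)

lemma pre_mono: "i \<le> j \<Longrightarrow> pre \<alpha> i \<le> pre \<alpha> j"
proof -
  assume "i \<le> j"
  then obtain d where "j = i + d" using le_Suc_ex by blast
  then show ?thesis by (simp add: pre_def take_add)
qed

lemma pre_len: "pre \<alpha> (length \<alpha>) = sum_list \<alpha>" by (simp add: pre_def)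

lemma pre_sum: "g \<le> length \<alpha> \<Longrightarrow> real (pre \<alpha> g) = (\<Sum>b\<in>{0..<g}. real (\<alpha> ! b))"
proof (induction g)
  case 0 then show ?case by simp
next
  case (Suc g) then show ?case by (simp add: pre_Suc)
qed

definition grp :: "nat list \<Rightarrow> nat \<Rightarrow> nat" where
  "grp \<alpha> u = (THE b. b < length \<alpha> \<and> pre \<alpha> b \<le> u \<and> u < pre \<alpha> (Suc b))"

definition adjG :: "nat \<Rightarrow> nat \<Rightarrow> bool" where
  "adjG a b = (if a = b then even a else odd (max a b))"

lemma pre_ex: "m \<le> length \<alpha> \<Longrightarrow> u < pre \<alpha> m \<Longrightarrow> \<exists>b<m. pre \<alpha> b \<le> u \<and> u < pre \<alpha> (Suc b)"
proof (induction m)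
  case 0 then show ?case by simp
next
  case (Suc m)
  show ?case
  proof (cases "u < pre \<alpha> m")
    case True then show ?thesis using Suc by (meson Suc_leD less_Suc_eq)
  next
    case False then show ?thesis using Suc by (auto intro!: exI[of _ m])
  qed
qed

lemma pre_uniq: "b < length \<alpha> \<Longrightarrow> c < length \<alpha> \<Longrightarrow> pre \<alpha> b \<le> u \<Longrightarrow> u < pre \<alpha> (Suc b)
   \<Longrightarrow> pre \<alpha> c \<le> u \<Longrightarrow> u < pre \<alpha> (Suc c) \<Longrightarrow> b = c"
proof (rule ccontr)
  assume h: "b < length \<alpha>" "c < length \<alpha>" "pre \<alpha> b \<le> u" "u < pre \<alpha> (Suc b)"
    "pre \<alpha> c \<le> u" "u < pre \<alpha> (Suc c)" "b \<noteq> c"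
  show False
  proof (cases "b < c")
    case True then have "pre \<alpha> (Suc b) \<le> pre \<alpha> c" by (intro pre_mono) simp
    then show False using h by simp
  next
    case False then have "pre \<alpha> (Suc c) \<le> pre \<alpha> b" using h by (intro pre_mono) simp
    then show False using h by simp
  qed
qed

lemma grp_prop: assumes "u < sum_list \<alpha>"
  shows "grp \<alpha> u < length \<alpha> \<and> pre \<alpha> (grp \<alpha> u) \<le> u \<and> u < pre \<alpha> (Suc (grp \<alpha> u))"
proof -
  obtain b where b: "b < length \<alpha>" "pre \<alpha> b \<le> u" "u < pre \<alpha> (Suc b)"
    using pre_ex[of "length \<alpha>" \<alpha> u] assms pre_len by auto
  have "grp \<alpha> u = b" unfolding grp_def
    by (rule the_equality) (use b pre_uniq in blast)+
  then show ?thesis using b by simp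
qed

lemma grp_eq: "b < length \<alpha> \<Longrightarrow> pre \<alpha> b \<le> u \<Longrightarrow> u < pre \<alpha> (Suc b) \<Longrightarrow> grp \<alpha> u = b"
  unfolding grp_def by (rule the_equality) (use pre_uniq in blast)+

lemma grp_lt: assumes "u < pre \<alpha> i" "i \<le> length \<alpha>" shows "grp \<alpha> u < i"
proof -
  have u: "u < sum_list \<alpha>" using assms pre_mono[of i "length \<alpha>" \<alpha>] pre_len by simp
  show ?thesis
  proof (rule ccontr)
    assume "\<not> grp \<alpha> u < i"
    then have "pre \<alpha> i \<le> pre \<alpha> (grp \<alpha> u)" by (intro pre_mono) simp
    then show False using grp_prop[OF u] assms by simp
  qed
qed

lemma C_adj_closed: "i \<le> length \<alpha> \<Longrightarrow> C_adj \<alpha> i u v \<longleftrightarrow>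
   (u < pre \<alpha> i \<and> v < pre \<alpha> i \<and> u \<noteq> v \<and>
     (if grp \<alpha> u = grp \<alpha> v then even (i - grp \<alpha> u) else odd (i - max (grp \<alpha> u) (grp \<alpha> v))))"
proof (induction i)
  case 0 then show ?case by simp
next
  case (Suc i)
  have il: "i < length \<alpha>" using Suc by simp
  show ?case
  proof (cases "u < pre \<alpha> i")
    case u: True
    show ?thesis
    proof (cases "v < pre \<alpha> i")
      case v: True
      have "grp \<alpha> u < i" "grp \<alpha> v < i" using grp_lt u v il by auto
      then show ?thesis using Suc u v pre_mono[of i "Suc i" \<alpha>]
        by (auto simp: Suc_diff_le)
    next
      case v: False
      have gu: "grp \<alpha> u < i" using grp_lt u il by auto
      show ?thesis
      proof (cases "v < pre \<alpha> (Suc i)")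
        case True
        then have "grp \<alpha> v = i" using v il grp_eq by simp
        then show ?thesis using Suc u v True gu pre_mono[of i "Suc i" \<alpha>] by auto
      qed (use Suc.IH il u v in auto)
    qed
  next
    case u: False
    show ?thesis
    proof (cases "u < pre \<alpha> (Suc i)")
      case uT: True
      then have gu: "grp \<alpha> u = i" using u il grp_eq by simp
      show ?thesis
      proof (cases "v < pre \<alpha> i")
        case v: True
        have "grp \<alpha> v < i" using grp_lt v il by auto
        then show ?thesis using Suc u v uT gu il by auto
      next
        case v: False
        show ?thesis
        proof (cases "v < pre \<alpha> (Suc i)")
          case True
          then have "grp \<alpha> v = i" using v il grp_eq by simp
          then show ?thesis using Suc u v True gu uT il by auto
        qed (use Suc.IH il u v in auto)
      qed
    qed (use Suc.IH il u in auto)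
  qed
qed

lemma C_graph_closed: assumes "even (length \<alpha>)"
  shows "C_graph_adj \<alpha> u v \<longleftrightarrow> (u < sum_list \<alpha> \<and> v < sum_list \<alpha> \<and> u \<noteq> v \<and> adjG (grp \<alpha> u) (grp \<alpha> v))"
proof -
  have "C_graph_adj \<alpha> u v \<longleftrightarrow> (u < sum_list \<alpha> \<and> v < sum_list \<alpha> \<and> u \<noteq> v \<and>
     (if grp \<alpha> u = grp \<alpha> v then even (length \<alpha> - grp \<alpha> u) else odd (length \<alpha> - max (grp \<alpha> u) (grp \<alpha> v))))"
    unfolding C_graph_adj_def using C_adj_closed[of "length \<alpha>" \<alpha> u v] pre_len by simp
  also have "\<dots> \<longleftrightarrow> (u < sum_list \<alpha> \<and> v < sum_list \<alpha> \<and> u \<noteq> v \<and> adjG (grp \<alpha> u) (grp \<alpha> v))"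
  proof -
    { assume "u < sum_list \<alpha>" "v < sum_list \<alpha>"
      then have "grp \<alpha> u < length \<alpha>" "grp \<alpha> v < length \<alpha>" using grp_prop by auto
      then have "(if grp \<alpha> u = grp \<alpha> v then even (length \<alpha> - grp \<alpha> u) else odd (length \<alpha> - max (grp \<alpha> u) (grp \<alpha> v)))
          = adjG (grp \<alpha> u) (grp \<alpha> v)" using assms unfolding adjG_def
        by (auto simp: max_def)
    }
    then show ?thesis by blast
  qed
  finally show ?thesis .
qed


lemma lap_mult:
  assumes v: "v \<in> carrier_vec n" and u: "u < n" and irr: "\<not> adj u u"
  shows "(laplacian n adj *\<^sub>v v) $ u = (\<Sum>w\<in>{0..<n}. if adj u w then v $ u - v $ w else 0)"
proof -
  have "(laplacian n adj *\<^sub>v v) $ u = (\<Sum>w\<in>{0..<n}.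
     ((if u = w then real (card {w. w < n \<and> adj u w}) else 0) - (if adj u w then 1 else 0)) * v $ w)"
    using v u by (simp add: laplacian_def mult_mat_vec_def scalar_prod_def)
  also have "\<dots> = (\<Sum>w\<in>{0..<n}. (if u = w then real (card {w. w < n \<and> adj u w}) * v $ w else 0))
       - (\<Sum>w\<in>{0..<n}. if adj u w then v $ w else 0)"
    unfolding sum_subtractf[symmetric] by (rule sum.cong) (auto simp: algebra_simps)
  also have "(\<Sum>w\<in>{0..<n}. (if u = w then real (card {w. w < n \<and> adj u w}) * v $ w else 0))
      = real (card {w. w < n \<and> adj u w}) * v $ u"
    using u by (simp add: sum.delta)
  also have "real (card {w. w < n \<and> adj u w}) = (\<Sum>w\<in>{0..<n}. if adj u w then 1 else 0)"
  proof -
    have "{w. w < n \<and> adj u w} = {0..<n} \<inter> Collect (adj u)" by auto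
    then show ?thesis by (simp add: sum.If_cases)
  qed
  finally show ?thesis
    by (simp add: sum_distrib_right sum_subtractf[symmetric] if_distrib cong: if_cong)
qed

lemma group_sum: "m \<le> length \<alpha> \<Longrightarrow>
   (\<Sum>w\<in>{0..<pre \<alpha> m}. f w) = (\<Sum>b\<in>{0..<m}. \<Sum>w\<in>{pre \<alpha> b..<pre \<alpha> (Suc b)}. f w)"
proof (induction m)
  case 0 then show ?case by simp
next
  case (Suc m)
  have "(\<Sum>w\<in>{0..<pre \<alpha> (Suc m)}. f w) = (\<Sum>w\<in>{0..<pre \<alpha> m}. f w) + (\<Sum>w\<in>{pre \<alpha> m..<pre \<alpha> (Suc m)}. f w)"
    by (rule sum.atLeastLessThan_concat[symmetric]) (auto intro: pre_mono)
  then show ?case using Suc by simp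
qed


definition al :: "nat list \<Rightarrow> nat \<Rightarrow> real" where "al \<alpha> b = real (\<alpha> ! b)"
definition Sg :: "nat list \<Rightarrow> (nat \<Rightarrow> real) \<Rightarrow> nat \<Rightarrow> real" where
  "Sg \<alpha> f b = (\<Sum>w\<in>{pre \<alpha> b..<pre \<alpha> (Suc b)}. f w)"
definition Dg :: "nat list \<Rightarrow> nat \<Rightarrow> real" where
  "Dg \<alpha> a = (\<Sum>b\<in>{0..<length \<alpha>}. if adjG a b then al \<alpha> b else 0)"
definition Q :: "nat list \<Rightarrow> (nat \<Rightarrow> real) \<Rightarrow> nat \<Rightarrow> real" where
  "Q \<alpha> t a = (\<Sum>b\<in>{0..<length \<alpha>}. if adjG a b then al \<alpha> b * (t a - t b) else 0)"

context
  fixes \<alpha> :: "nat list"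
  assumes ev: "even (length \<alpha>)"
begin

lemma adj_sum:
  assumes u: "u < sum_list \<alpha>"
  shows "(\<Sum>w\<in>{0..<sum_list \<alpha>}. if C_graph_adj \<alpha> u w then f w else 0)
    = (\<Sum>b\<in>{0..<length \<alpha>}. if adjG (grp \<alpha> u) b then Sg \<alpha> f b else 0)
      - (if even (grp \<alpha> u) then f u else 0)"
proof -
  let ?a = "grp \<alpha> u"
  have "(\<Sum>w\<in>{0..<sum_list \<alpha>}. if C_graph_adj \<alpha> u w then f w else 0)
      = (\<Sum>w\<in>{0..<sum_list \<alpha>}. (if adjG ?a (grp \<alpha> w) then f w else 0) - (if w = u then (if even ?a then f u else 0) else 0))"
    by (rule sum.cong) (auto simp: C_graph_closed[OF ev] adjG_def u)
  also have "\<dots> = (\<Sum>w\<in>{0..<sum_list \<alpha>}. if adjG ?a (grp \<alpha> w) then f w else 0) - (if even ?a then f u else 0)"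
    using u by (simp add: sum_subtractf sum.delta)
  also have "(\<Sum>w\<in>{0..<sum_list \<alpha>}. if adjG ?a (grp \<alpha> w) then f w else 0)
     = (\<Sum>b\<in>{0..<length \<alpha>}. \<Sum>w\<in>{pre \<alpha> b..<pre \<alpha> (Suc b)}. if adjG ?a (grp \<alpha> w) then f w else 0)"
    using group_sum[of "length \<alpha>" \<alpha>] pre_len by simp
  also have "\<dots> = (\<Sum>b\<in>{0..<length \<alpha>}. if adjG ?a b then Sg \<alpha> f b else 0)"
  proof (rule sum.cong)
    fix b assume b: "b \<in> {0..<length \<alpha>}"
    have "(\<Sum>w\<in>{pre \<alpha> b..<pre \<alpha> (Suc b)}. if adjG ?a (grp \<alpha> w) then f w else 0)
        = (\<Sum>w\<in>{pre \<alpha> b..<pre \<alpha> (Suc b)}. if adjG ?a b then f w else 0)"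
      by (rule sum.cong) (use b grp_eq in auto)
    then show "(\<Sum>w\<in>{pre \<alpha> b..<pre \<alpha> (Suc b)}. if adjG ?a (grp \<alpha> w) then f w else 0)
        = (if adjG ?a b then Sg \<alpha> f b else 0)" by (simp add: Sg_def)
  qed simp
  finally show ?thesis .
qed

lemma Sg_const: "b < length \<alpha> \<Longrightarrow> Sg \<alpha> (\<lambda>w. c) b = al \<alpha> b * c"
  by (simp add: Sg_def al_def pre_Suc)

lemma Sg_grp: "b < length \<alpha> \<Longrightarrow> Sg \<alpha> (\<lambda>w. t (grp \<alpha> w)) b = al \<alpha> b * t b"
proof -
  assume b: "b < length \<alpha>"
  have "Sg \<alpha> (\<lambda>w. t (grp \<alpha> w)) b = Sg \<alpha> (\<lambda>w. t b) b" unfolding Sg_def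
    by (rule sum.cong) (use b grp_eq in auto)
  then show ?thesis using Sg_const b by simp
qed

lemma lap_eq:
  assumes v: "v \<in> carrier_vec (sum_list \<alpha>)" and u: "u < sum_list \<alpha>"
  shows "(laplacian (sum_list \<alpha>) (C_graph_adj \<alpha>) *\<^sub>v v) $ u
     = Dg \<alpha> (grp \<alpha> u) * v $ u - (\<Sum>b\<in>{0..<length \<alpha>}. if adjG (grp \<alpha> u) b then Sg \<alpha> (\<lambda>w. v $ w) b else 0)"
proof -
  let ?a = "grp \<alpha> u"
  have irr: "\<not> C_graph_adj \<alpha> u u" by (simp add: C_graph_closed[OF ev])
  have "(laplacian (sum_list \<alpha>) (C_graph_adj \<alpha>) *\<^sub>v v) $ u
     = (\<Sum>w\<in>{0..<sum_list \<alpha>}. if C_graph_adj \<alpha> u w then v $ u else 0)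
      - (\<Sum>w\<in>{0..<sum_list \<alpha>}. if C_graph_adj \<alpha> u w then v $ w else 0)"
    unfolding lap_mult[where adj="C_graph_adj \<alpha>", OF v u irr] sum_subtractf[symmetric] by (rule sum.cong) auto
  also have "\<dots> = ((\<Sum>b\<in>{0..<length \<alpha>}. if adjG ?a b then al \<alpha> b * v $ u else 0) - (if even ?a then v $ u else 0))
      - ((\<Sum>b\<in>{0..<length \<alpha>}. if adjG ?a b then Sg \<alpha> (\<lambda>w. v $ w) b else 0) - (if even ?a then v $ u else 0))"
  proof -
    have "(\<Sum>b\<in>{0..<length \<alpha>}. if adjG ?a b then Sg \<alpha> (\<lambda>w. v $ u) b else 0)
      = (\<Sum>b\<in>{0..<length \<alpha>}. if adjG ?a b then al \<alpha> b * v $ u else 0)"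
      by (rule sum.cong) (auto simp: Sg_const)
    then show ?thesis
      unfolding adj_sum[OF u, of "\<lambda>w. v $ u"] adj_sum[OF u, of "\<lambda>w. v $ w"] by simp
  qed
  also have "(\<Sum>b\<in>{0..<length \<alpha>}. if adjG ?a b then al \<alpha> b * v $ u else 0) = Dg \<alpha> ?a * v $ u"
    unfolding Dg_def sum_distrib_right by (rule sum.cong) auto
  finally show ?thesis by simp
qed

lemma lap_grp:
  assumes u: "u < sum_list \<alpha>"
  shows "(laplacian (sum_list \<alpha>) (C_graph_adj \<alpha>) *\<^sub>v vec (sum_list \<alpha>) (\<lambda>w. t (grp \<alpha> w))) $ u
     = Q \<alpha> t (grp \<alpha> u)"
proof -
  let ?a = "grp \<alpha> u"
  have a: "?a < length \<alpha>" using grp_prop u by blast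
  have S: "Sg \<alpha> (\<lambda>w. vec (sum_list \<alpha>) (\<lambda>w. t (grp \<alpha> w)) $ w) b = al \<alpha> b * t b" if b: "b < length \<alpha>" for b
  proof -
    have "Sg \<alpha> (\<lambda>w. vec (sum_list \<alpha>) (\<lambda>w. t (grp \<alpha> w)) $ w) b = Sg \<alpha> (\<lambda>w. t (grp \<alpha> w)) b"
      unfolding Sg_def
    proof (rule sum.cong)
      fix w assume "w \<in> {pre \<alpha> b..<pre \<alpha> (Suc b)}"
      then have "w < sum_list \<alpha>" using pre_mono[of "Suc b" "length \<alpha>" \<alpha>] b pre_len by auto
      then show "vec (sum_list \<alpha>) (\<lambda>w. t (grp \<alpha> w)) $ w = t (grp \<alpha> w)" by simp
    qed simp
    then show ?thesis using Sg_grp b by simp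
  qed
  have "Q \<alpha> t ?a = (\<Sum>b\<in>{0..<length \<alpha>}. if adjG ?a b then al \<alpha> b * t ?a else 0)
     - (\<Sum>b\<in>{0..<length \<alpha>}. if adjG ?a b then al \<alpha> b * t b else 0)"
    unfolding Q_def sum_subtractf[symmetric] by (rule sum.cong) (auto simp: algebra_simps)
  also have "(\<Sum>b\<in>{0..<length \<alpha>}. if adjG ?a b then al \<alpha> b * t ?a else 0) = Dg \<alpha> ?a * t ?a"
    unfolding Dg_def sum_distrib_right by (rule sum.cong) auto
  also have "(\<Sum>b\<in>{0..<length \<alpha>}. if adjG ?a b then al \<alpha> b * t b else 0)
     = (\<Sum>b\<in>{0..<length \<alpha>}. if adjG ?a b then Sg \<alpha> (\<lambda>w. vec (sum_list \<alpha>) (\<lambda>w. t (grp \<alpha> w)) $ w) b else 0)"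
    by (rule sum.cong) (auto simp: S)
  finally show ?thesis
    unfolding lap_eq[OF vec_carrier u] using u by simp
qed

end


definition E :: "nat list \<Rightarrow> nat \<Rightarrow> real" where
  "E \<alpha> g = (\<Sum>b\<in>{Suc g..<length \<alpha>}. if odd b then al \<alpha> b else 0)"
definition lam :: "nat list \<Rightarrow> nat \<Rightarrow> real" where
  "lam \<alpha> g = (if odd g then real (pre \<alpha> (Suc g)) else 0) + E \<alpha> g"
definition tv :: "nat list \<Rightarrow> nat \<Rightarrow> nat \<Rightarrow> real" where
  "tv \<alpha> g b = (if b < g then al \<alpha> g else if b = g then - real (pre \<alpha> g) else 0)"

lemma sum_split3: "g < k \<Longrightarrow> (\<Sum>b\<in>{0..<k}. F b) = (\<Sum>b\<in>{0..<g}. F b) + F g + (\<Sum>b\<in>{Suc g..<k}. F b)"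
proof -
  assume g: "g < k"
  have "(\<Sum>b\<in>{0..<k}. F b) = (\<Sum>b\<in>{0..<g}. F b) + (\<Sum>b\<in>{g..<k}. F b)"
    using g by (simp add: sum.atLeastLessThan_concat)
  also have "(\<Sum>b\<in>{g..<k}. F b) = F g + (\<Sum>b\<in>{Suc g..<k}. F b)"
    using g by (simp add: sum.atLeast_Suc_lessThan)
  finally show ?thesis by (simp add: add.assoc)
qed

lemma pre_al: "g \<le> length \<alpha> \<Longrightarrow> (\<Sum>b\<in>{0..<g}. al \<alpha> b) = real (pre \<alpha> g)"
  by (simp add: pre_sum al_def)

lemma pre_Suc_al: "g < length \<alpha> \<Longrightarrow> real (pre \<alpha> (Suc g)) = real (pre \<alpha> g) + al \<alpha> g"
  by (simp add: pre_Suc al_def)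

lemma Q_tv:
  assumes g: "g < length \<alpha>" and a: "a < length \<alpha>"
  shows "Q \<alpha> (tv \<alpha> g) a = lam \<alpha> g * tv \<alpha> g a"
proof -
  let ?t = "tv \<alpha> g"
  let ?F = "\<lambda>b. if adjG a b then al \<alpha> b * (?t a - ?t b) else 0"
  have Q: "Q \<alpha> ?t a = (\<Sum>b\<in>{0..<g}. ?F b) + ?F g + (\<Sum>b\<in>{Suc g..<length \<alpha>}. ?F b)"
    unfolding Q_def by (rule sum_split3[OF g])
  have P: "(\<Sum>b\<in>{0..<g}. al \<alpha> b) = real (pre \<alpha> g)" using g by (simp add: pre_al)
  have PS: "real (pre \<alpha> (Suc g)) = real (pre \<alpha> g) + al \<alpha> g" using g by (rule pre_Suc_al)
  consider "a < g" | "a = g" | "g < a" by linarith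
  then show ?thesis
  proof cases
    case 1
    have S1: "(\<Sum>b\<in>{0..<g}. ?F b) = 0" by (rule sum.neutral) (use 1 in \<open>auto simp: tv_def\<close>)
    have F: "?F g = (if odd g then al \<alpha> g * (al \<alpha> g + real (pre \<alpha> g)) else 0)"
      using 1 by (auto simp: tv_def adjG_def max_def)
    have S3: "(\<Sum>b\<in>{Suc g..<length \<alpha>}. ?F b) = al \<alpha> g * E \<alpha> g"
      unfolding E_def sum_distrib_left by (rule sum.cong) (use 1 in \<open>auto simp: tv_def adjG_def max_def\<close>)
    show ?thesis unfolding Q S1 F S3 using 1 by (simp add: lam_def tv_def PS algebra_simps)
  next
    case 2
    have S1: "(\<Sum>b\<in>{0..<g}. ?F b) = (if odd g then real (pre \<alpha> g) * (- real (pre \<alpha> g) - al \<alpha> g) else 0)"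
    proof (cases "odd g")
      case True
      have "(\<Sum>b\<in>{0..<g}. ?F b) = (\<Sum>b\<in>{0..<g}. al \<alpha> b * (- real (pre \<alpha> g) - al \<alpha> g))"
        by (rule sum.cong) (use 2 True in \<open>auto simp: tv_def adjG_def max_def\<close>)
      then show ?thesis using True by (simp add: sum_distrib_right[symmetric] P)
    next
      case False
      show ?thesis by (rule trans[OF sum.neutral]) (use 2 False in \<open>auto simp: tv_def adjG_def max_def\<close>)
    qed
    have F: "?F g = 0" using 2 by simp
    have S3: "(\<Sum>b\<in>{Suc g..<length \<alpha>}. ?F b) = - real (pre \<alpha> g) * E \<alpha> g"
      unfolding E_def sum_distrib_left by (rule sum.cong) (use 2 in \<open>auto simp: tv_def adjG_def max_def\<close>)
    show ?thesis unfolding Q S1 F S3 using 2 by (simp add: lam_def tv_def PS algebra_simps)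
  next
    case 3
    have S1: "(\<Sum>b\<in>{0..<g}. ?F b) = (if odd a then - al \<alpha> g * real (pre \<alpha> g) else 0)"
    proof (cases "odd a")
      case True
      have "(\<Sum>b\<in>{0..<g}. ?F b) = (\<Sum>b\<in>{0..<g}. al \<alpha> b * (- al \<alpha> g))"
        by (rule sum.cong) (use 3 True in \<open>auto simp: tv_def adjG_def max_def\<close>)
      also have "\<dots> = (\<Sum>b\<in>{0..<g}. al \<alpha> b) * (- al \<alpha> g)" by (rule sum_distrib_right[symmetric])
      finally show ?thesis using True by (simp add: P)
    next
      case False
      show ?thesis by (rule trans[OF sum.neutral]) (use 3 False in \<open>auto simp: tv_def adjG_def max_def\<close>)
    qed
    have F: "?F g = (if odd a then al \<alpha> g * real (pre \<alpha> g) else 0)"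
      using 3 by (auto simp: tv_def adjG_def max_def)
    have S3: "(\<Sum>b\<in>{Suc g..<length \<alpha>}. ?F b) = 0"
      by (rule sum.neutral) (use 3 in \<open>auto simp: tv_def\<close>)
    show ?thesis unfolding Q S1 F S3 using 3 by (simp add: tv_def)
  qed
qed


lemma Q_back:
  assumes g: "g < length \<alpha>" and z: "\<And>b. g < b \<Longrightarrow> b < length \<alpha> \<Longrightarrow> t b = 0"
    and s0: "(\<Sum>b\<in>{0..<length \<alpha>}. al \<alpha> b * t b) = 0"
  shows "Q \<alpha> t g = lam \<alpha> g * t g" and "(\<Sum>b\<in>{0..<g}. al \<alpha> b * t b) = - al \<alpha> g * t g"
proof -
  have "(\<Sum>b\<in>{0..<length \<alpha>}. al \<alpha> b * t b) = (\<Sum>b\<in>{0..<g}. al \<alpha> b * t b) + al \<alpha> g * t g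
     + (\<Sum>b\<in>{Suc g..<length \<alpha>}. al \<alpha> b * t b)" by (rule sum_split3[OF g])
  also have "(\<Sum>b\<in>{Suc g..<length \<alpha>}. al \<alpha> b * t b) = 0" by (rule sum.neutral) (auto simp: z)
  finally show B: "(\<Sum>b\<in>{0..<g}. al \<alpha> b * t b) = - al \<alpha> g * t g" using s0 by simp
  let ?F = "\<lambda>b. if adjG g b then al \<alpha> b * (t g - t b) else 0"
  have Q: "Q \<alpha> t g = (\<Sum>b\<in>{0..<g}. ?F b) + ?F g + (\<Sum>b\<in>{Suc g..<length \<alpha>}. ?F b)"
    unfolding Q_def by (rule sum_split3[OF g])
  have P: "(\<Sum>b\<in>{0..<g}. al \<alpha> b) = real (pre \<alpha> g)" using g by (simp add: pre_al)
  have PS: "real (pre \<alpha> (Suc g)) = real (pre \<alpha> g) + al \<alpha> g" using g by (rule pre_Suc_al)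
  have S1: "(\<Sum>b\<in>{0..<g}. ?F b) = (if odd g then (real (pre \<alpha> g) + al \<alpha> g) * t g else 0)"
  proof (cases "odd g")
    case True
    have "(\<Sum>b\<in>{0..<g}. ?F b) = (\<Sum>b\<in>{0..<g}. al \<alpha> b * t g - al \<alpha> b * t b)"
      by (rule sum.cong) (use True in \<open>auto simp: adjG_def max_def algebra_simps\<close>)
    also have "\<dots> = (\<Sum>b\<in>{0..<g}. al \<alpha> b) * t g - (\<Sum>b\<in>{0..<g}. al \<alpha> b * t b)"
      by (simp add: sum_subtractf sum_distrib_right)
    finally show ?thesis using True B P by (simp add: algebra_simps)
  next
    case False
    show ?thesis by (rule trans[OF sum.neutral]) (use False in \<open>auto simp: adjG_def max_def\<close>)
  qed
  have S3: "(\<Sum>b\<in>{Suc g..<length \<alpha>}. ?F b) = E \<alpha> g * t g"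
    unfolding E_def sum_distrib_right by (rule sum.cong) (auto simp: adjG_def max_def z)
  show "Q \<alpha> t g = lam \<alpha> g * t g" unfolding Q S1 S3 by (simp add: lam_def PS algebra_simps)
qed

context
  fixes \<alpha> :: "nat list"
  assumes ev: "even (length \<alpha>)" and k2: "length \<alpha> \<ge> 2" and pos: "\<forall>a \<in> set \<alpha>. a > 0"
begin

lemma adj_sym: "C_graph_adj \<alpha> u w = C_graph_adj \<alpha> w u"
  by (auto simp: C_graph_closed[OF ev] adjG_def max_def)

lemma sum_zero:
  assumes v: "v \<in> carrier_vec (sum_list \<alpha>)"
  shows "(\<Sum>u\<in>{0..<sum_list \<alpha>}. (laplacian (sum_list \<alpha>) (C_graph_adj \<alpha>) *\<^sub>v v) $ u) = 0"
proof -
  let ?n = "sum_list \<alpha>" let ?A = "C_graph_adj \<alpha>"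
  have "(\<Sum>u\<in>{0..<?n}. (laplacian ?n ?A *\<^sub>v v) $ u)
     = (\<Sum>u\<in>{0..<?n}. \<Sum>w\<in>{0..<?n}. if ?A u w then v $ u - v $ w else 0)"
  proof (rule sum.cong)
    fix u assume "u \<in> {0..<?n}"
    then show "(laplacian ?n ?A *\<^sub>v v) $ u = (\<Sum>w\<in>{0..<?n}. if ?A u w then v $ u - v $ w else 0)"
      by (intro lap_mult[where adj="?A", OF v]) (auto simp: C_graph_closed[OF ev])
  qed simp
  also have "\<dots> = (\<Sum>u\<in>{0..<?n}. \<Sum>w\<in>{0..<?n}. if ?A u w then v $ u else 0)
       - (\<Sum>u\<in>{0..<?n}. \<Sum>w\<in>{0..<?n}. if ?A u w then v $ w else 0)"
    unfolding sum_subtractf[symmetric] by (intro sum.cong refl) auto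
  also have "(\<Sum>u\<in>{0..<?n}. \<Sum>w\<in>{0..<?n}. if ?A u w then v $ w else 0)
      = (\<Sum>w\<in>{0..<?n}. \<Sum>u\<in>{0..<?n}. if ?A u w then v $ w else 0)" by (rule sum.swap)
  also have "\<dots> = (\<Sum>u\<in>{0..<?n}. \<Sum>w\<in>{0..<?n}. if ?A u w then v $ u else 0)"
    by (subst adj_sym) (rule refl)
  finally show ?thesis by simp
qed


lemma sum_split_odd: "(\<Sum>b\<in>A. f b) = (\<Sum>b\<in>A. if odd b then f b else 0) + (\<Sum>b\<in>A. if odd b then 0 else f b)"
  unfolding sum.distrib[symmetric] by (rule sum.cong) auto

lemma al_pos: "b < length \<alpha> \<Longrightarrow> al \<alpha> b > 0"
  using pos nth_mem[of b \<alpha>] by (auto simp: al_def)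

lemma al_nn: "al \<alpha> b \<ge> 0" by (simp add: al_def)

lemma E_diff: "g < h \<Longrightarrow> h < length \<alpha> \<Longrightarrow>
  E \<alpha> g = (\<Sum>b\<in>{Suc g..<Suc h}. if odd b then al \<alpha> b else 0) + E \<alpha> h"
  unfolding E_def by (rule sum.atLeastLessThan_concat[symmetric]) auto

lemma pre_diff: "g < h \<Longrightarrow> h < length \<alpha> \<Longrightarrow>
  real (pre \<alpha> (Suc h)) = real (pre \<alpha> (Suc g)) + (\<Sum>b\<in>{Suc g..<Suc h}. al \<alpha> b)"
proof -
  assume gh: "g < h" "h < length \<alpha>"
  have "real (pre \<alpha> (Suc h)) = (\<Sum>b\<in>{0..<Suc h}. al \<alpha> b)" using gh pre_al[of "Suc h" \<alpha>] by simp
  also have "\<dots> = (\<Sum>b\<in>{0..<Suc g}. al \<alpha> b) + (\<Sum>b\<in>{Suc g..<Suc h}. al \<alpha> b)"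
    by (rule sum.atLeastLessThan_concat[symmetric]) (use gh in auto)
  finally show ?thesis using gh pre_al[of "Suc g" \<alpha>] by simp
qed

lemma E_nn: "E \<alpha> g \<ge> 0" unfolding E_def by (rule sum_nonneg) (auto simp: al_nn)

definition "Od = (\<Sum>b\<in>{0..<length \<alpha>}. if odd b then al \<alpha> b else 0)"

lemma lam_even: "even g \<Longrightarrow> g < length \<alpha> \<Longrightarrow> lam \<alpha> g \<le> Od"
  unfolding lam_def Od_def E_def by (auto intro!: sum_mono2 simp: al_nn)

lemma lam_odd: "odd g \<Longrightarrow> g < length \<alpha> \<Longrightarrow> lam \<alpha> g > Od"
proof -
  assume g: "odd g" "g < length \<alpha>"
  have "Od = (\<Sum>b\<in>{0..<Suc g}. if odd b then al \<alpha> b else 0) + E \<alpha> g"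
    unfolding Od_def E_def by (rule sum.atLeastLessThan_concat[symmetric]) (use g in auto)
  moreover have "real (pre \<alpha> (Suc g)) = (\<Sum>b\<in>{0..<Suc g}. if odd b then al \<alpha> b else 0)
       + (\<Sum>b\<in>{0..<Suc g}. if odd b then 0 else al \<alpha> b)"
    using g pre_al[of "Suc g" \<alpha>] sum_split_odd[of "al \<alpha>" "{0..<Suc g}"] by simp
  moreover have "(\<Sum>b\<in>{0..<Suc g}. if odd b then 0 else al \<alpha> b) \<ge> (if odd (0::nat) then 0 else al \<alpha> 0)"
    by (rule member_le_sum) (auto simp: al_nn)
  moreover have "al \<alpha> 0 > 0" by (rule al_pos) (use g in linarith)
  ultimately show ?thesis using g by (simp add: lam_def)
qed

lemma lam_lt: assumes gh: "g < h" "h < length \<alpha>"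
  shows "odd g \<Longrightarrow> odd h \<Longrightarrow> lam \<alpha> g < lam \<alpha> h"
    and "even g \<Longrightarrow> even h \<Longrightarrow> lam \<alpha> h < lam \<alpha> g"
proof -
  have m: "Suc g \<in> {Suc g..<Suc h}" using gh by simp
  have sg: "al \<alpha> (Suc g) > 0" using gh al_pos by simp
  assume o: "odd g" "odd h"
  have "(\<Sum>b\<in>{Suc g..<Suc h}. al \<alpha> b) = (\<Sum>b\<in>{Suc g..<Suc h}. if odd b then al \<alpha> b else 0)
       + (\<Sum>b\<in>{Suc g..<Suc h}. if odd b then 0 else al \<alpha> b)"
    by (rule sum_split_odd)
  moreover have "(\<Sum>b\<in>{Suc g..<Suc h}. if odd b then 0 else al \<alpha> b) \<ge> (if odd (Suc g) then 0 else al \<alpha> (Suc g))"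
    by (rule member_le_sum[OF m]) (auto simp: al_nn)
  moreover have "\<not> odd (Suc g)" using o by simp
  ultimately show "lam \<alpha> g < lam \<alpha> h" using o sg E_diff[OF gh] pre_diff[OF gh] unfolding lam_def
    by (simp only: if_True if_False not_False_eq_True; linarith)
next
  have m: "Suc g \<in> {Suc g..<Suc h}" using gh by simp
  have sg: "al \<alpha> (Suc g) > 0" using gh al_pos by simp
  assume o: "even g" "even h"
  have "(\<Sum>b\<in>{Suc g..<Suc h}. if odd b then al \<alpha> b else 0) \<ge> (if odd (Suc g) then al \<alpha> (Suc g) else 0)"
    by (rule member_le_sum[OF m]) (auto simp: al_nn)
  moreover have "odd (Suc g)" "\<not> odd g" "\<not> odd h" using o by simp_all
  ultimately show "lam \<alpha> h < lam \<alpha> g" using o sg E_diff[OF gh] unfolding lam_def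
    by (simp only: if_True if_False not_False_eq_True; linarith)
qed

lemma lam_inj: "inj_on (lam \<alpha>) {1..<length \<alpha>}"
proof (rule inj_onI)
  fix g h assume g: "g \<in> {1..<length \<alpha>}" and h: "h \<in> {1..<length \<alpha>}" and eq: "lam \<alpha> g = lam \<alpha> h"
  show "g = h"
  proof (rule ccontr)
    assume "g \<noteq> h"
    then consider "g < h" | "h < g" by linarith
    then show False
    proof cases
      case 1 then show False using eq g h lam_lt[OF 1] lam_even lam_odd
        by (smt (verit, best) atLeastLessThan_iff)
    next
      case 2 then show False using eq g h lam_lt[OF 2] lam_even lam_odd
        by (smt (verit, best) atLeastLessThan_iff)
    qed
  qed
qed

lemma lam_pos: "1 \<le> g \<Longrightarrow> g < length \<alpha> \<Longrightarrow> lam \<alpha> g > 0"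
proof -
  assume g: "1 \<le> g" "g < length \<alpha>"
  show ?thesis
  proof (cases "odd g")
    case True
    have "Od \<ge> 0" unfolding Od_def by (rule sum_nonneg) (auto simp: al_nn)
    then show ?thesis using lam_odd[OF True g(2)] by simp
  next
    case False
    then have "Suc g < length \<alpha>" using g ev by (metis Suc_lessI odd_pos even_Suc)
    then have "E \<alpha> g \<ge> (if odd (Suc g) then al \<alpha> (Suc g) else 0)" unfolding E_def
      by (intro member_le_sum) (auto simp: al_nn)
    then show ?thesis using False al_pos[of "Suc g"] \<open>Suc g < length \<alpha>\<close> by (simp add: lam_def)
  qed
qed

lemma Dg0: "Dg \<alpha> 0 = lam \<alpha> 1"
proof -
  have "Dg \<alpha> 0 = (\<Sum>b\<in>{0..<1}. if adjG 0 b then al \<alpha> b else 0) + (if adjG 0 1 then al \<alpha> 1 else 0)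
     + (\<Sum>b\<in>{Suc 1..<length \<alpha>}. if adjG 0 b then al \<alpha> b else 0)"
    unfolding Dg_def by (rule sum_split3) (use k2 in linarith)
  also have "(\<Sum>b\<in>{Suc 1..<length \<alpha>}. if adjG 0 b then al \<alpha> b else 0) = E \<alpha> 1"
    unfolding E_def by (rule sum.cong) (auto simp: adjG_def numeral_2_eq_2)
  moreover have "real (pre \<alpha> (Suc 0)) = al \<alpha> 0" using k2 pre_Suc_al[of 0 \<alpha>] by (cases \<alpha>) auto
  moreover have "real (pre \<alpha> (Suc 1)) = real (pre \<alpha> 1) + al \<alpha> 1" using k2 by (intro pre_Suc_al) simp
  ultimately show ?thesis using k2 by (simp add: lam_def adjG_def)
qed


abbreviation "LL \<equiv> laplacian (sum_list \<alpha>) (C_graph_adj \<alpha>)"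

lemma vert: "a < length \<alpha> \<Longrightarrow> pre \<alpha> a < sum_list \<alpha> \<and> grp \<alpha> (pre \<alpha> a) = a"
proof -
  assume a: "a < length \<alpha>"
  have "pre \<alpha> a < pre \<alpha> (Suc a)" using a al_pos[OF a] by (simp add: pre_Suc al_def)
  moreover have "pre \<alpha> (Suc a) \<le> sum_list \<alpha>" using a pre_mono[of "Suc a" "length \<alpha>" \<alpha>] pre_len by simp
  ultimately show ?thesis using a grp_eq by auto
qed

lemma dimL: "dim_row LL = sum_list \<alpha>" by (simp add: laplacian_def)

lemma eig_of_t:
  assumes Qt: "\<And>a. a < length \<alpha> \<Longrightarrow> Q \<alpha> t a = x * t a" and nz: "c < length \<alpha>" "t c \<noteq> 0"
  shows "eigenvalue LL x"
proof -
  let ?n = "sum_list \<alpha>"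
  let ?v = "vec ?n (\<lambda>w. t (grp \<alpha> w))"
  have "?v \<noteq> 0\<^sub>v ?n"
  proof
    assume "?v = 0\<^sub>v ?n"
    then have "?v $ pre \<alpha> c = 0" using vert[OF nz(1)] by simp
    then show False using vert[OF nz(1)] nz by simp
  qed
  moreover have "LL *\<^sub>v ?v = x \<cdot>\<^sub>v ?v"
  proof (rule eq_vecI)
    fix i assume "i < dim_vec (x \<cdot>\<^sub>v ?v)"
    then have i: "i < ?n" by simp
    then have "grp \<alpha> i < length \<alpha>" using grp_prop by blast
    then show "(LL *\<^sub>v ?v) $ i = (x \<cdot>\<^sub>v ?v) $ i"
      using i lap_grp[OF ev i, of t] Qt by simp
  qed (simp add: dimL)
  ultimately show ?thesis unfolding eigenvalue_def eigenvector_def dimL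
    by (intro exI[of _ ?v]) auto
qed

lemma lower_lam: "g \<in> {1..<length \<alpha>} \<Longrightarrow> eigenvalue LL (lam \<alpha> g)"
  by (rule eig_of_t[where t="tv \<alpha> g" and c=0]) (auto simp: Q_tv tv_def al_pos[THEN less_imp_neq, symmetric])

lemma lower_0: "eigenvalue LL 0"
  by (rule eig_of_t[where t="\<lambda>_. 1" and c=0]) (use k2 in \<open>auto simp: Q_def intro!: sum.neutral\<close>)

lemma upper: assumes e: "eigenvalue LL x"
  shows "x \<in> insert 0 (lam \<alpha> ` {1..<length \<alpha>} \<union> Dg \<alpha> ` {1..<length \<alpha>})"
proof (rule ccontr)
  let ?n = "sum_list \<alpha>" let ?k = "length \<alpha>"
  assume nS: "x \<notin> insert 0 (lam \<alpha> ` {1..<length \<alpha>} \<union> Dg \<alpha> ` {1..<length \<alpha>})"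
  obtain v where v: "v \<in> carrier_vec ?n" "v \<noteq> 0\<^sub>v ?n" "LL *\<^sub>v v = x \<cdot>\<^sub>v v"
    using e unfolding eigenvalue_def eigenvector_def dimL by auto
  have x0: "x \<noteq> 0" using nS by auto
  have xl: "x \<noteq> lam \<alpha> g" if "1 \<le> g" "g < ?k" for g using nS that by auto
  have xd: "x \<noteq> Dg \<alpha> a" if "a < ?k" for a
  proof (cases "a = 0")
    case True then show ?thesis using Dg0 xl[of 1] k2 by simp
  next
    case False then show ?thesis using nS that by auto
  qed
  have eq: "(LL *\<^sub>v v) $ u = x * v $ u" if "u < ?n" for u using v(3) that v(1) by simp
  have sz: "(\<Sum>u\<in>{0..<?n}. v $ u) = 0"
  proof -
    have "x * (\<Sum>u\<in>{0..<?n}. v $ u) = (\<Sum>u\<in>{0..<?n}. (LL *\<^sub>v v) $ u)"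
      by (simp add: sum_distrib_left eq)
    also have "\<dots> = 0" by (rule sum_zero[OF v(1)])
    finally show ?thesis using x0 by simp
  qed
  define R where "R a = (\<Sum>b\<in>{0..<?k}. if adjG a b then Sg \<alpha> (\<lambda>w. v $ w) b else 0)" for a
  define t where "t a = R a / (Dg \<alpha> a - x)" for a
  have vt: "v $ u = t (grp \<alpha> u)" if u: "u < ?n" for u
  proof -
    have g: "grp \<alpha> u < ?k" using grp_prop u by blast
    have "x * v $ u = Dg \<alpha> (grp \<alpha> u) * v $ u - R (grp \<alpha> u)"
      using eq[OF u] lap_eq[OF ev v(1) u] unfolding R_def by simp
    then have "(Dg \<alpha> (grp \<alpha> u) - x) * v $ u = R (grp \<alpha> u)" by (simp add: algebra_simps)
    then show ?thesis unfolding t_def using xd[OF g] by (simp add: field_simps)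
  qed
  have vv: "v = vec ?n (\<lambda>w. t (grp \<alpha> w))" by (rule eq_vecI) (use v(1) vt in auto)
  have Qt: "Q \<alpha> t a = x * t a" if a: "a < ?k" for a
  proof -
    have p: "pre \<alpha> a < ?n" "grp \<alpha> (pre \<alpha> a) = a" using vert[OF a] by auto
    have "Q \<alpha> t a = (LL *\<^sub>v v) $ pre \<alpha> a" using lap_grp[OF ev p(1), of t] p vv by simp
    also have "\<dots> = x * t a" using eq[OF p(1)] vt[OF p(1)] p by simp
    finally show ?thesis .
  qed
  have st: "(\<Sum>b\<in>{0..<?k}. al \<alpha> b * t b) = 0"
  proof -
    have "(\<Sum>u\<in>{0..<?n}. v $ u) = (\<Sum>u\<in>{0..<pre \<alpha> ?k}. t (grp \<alpha> u))"
      using vt pre_len by (auto intro: sum.cong)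
    also have "\<dots> = (\<Sum>b\<in>{0..<?k}. Sg \<alpha> (\<lambda>w. t (grp \<alpha> w)) b)"
      unfolding Sg_def by (rule group_sum) simp
    also have "\<dots> = (\<Sum>b\<in>{0..<?k}. al \<alpha> b * t b)" by (rule sum.cong) (auto simp: Sg_grp[OF ev])
    finally show ?thesis using sz by simp
  qed
  have Z: "\<forall>b. ?k - d \<le> b \<and> b < ?k \<longrightarrow> t b = 0" for d
  proof (induction d)
    case 0 then show ?case by simp
  next
    case (Suc d)
    show ?case
    proof (cases "Suc d \<le> ?k")
      case False then show ?thesis using Suc by simp
    next
      case True
      define g where "g = ?k - Suc d"
      have g: "g < ?k" using True by (simp add: g_def)
      have z: "t b = 0" if "g < b" "b < ?k" for b using Suc that by (simp add: g_def)
      have tg: "t g = 0"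
      proof (cases "g = 0")
        case True
        then show ?thesis using Q_back(2)[OF g z st] al_pos[OF g] by simp
      next
        case False
        then have "x * t g = lam \<alpha> g * t g" using Q_back(1)[OF g z st] Qt[OF g] by simp
        then show ?thesis using xl[of g] False g by simp
      qed
      show ?thesis
      proof (intro allI impI)
        fix b assume "?k - Suc d \<le> b \<and> b < ?k"
        then have "b = g \<or> g < b" by (auto simp: g_def)
        then show "t b = 0" using tg z \<open>?k - Suc d \<le> b \<and> b < ?k\<close> by auto
      qed
    qed
  qed
  have "v = 0\<^sub>v ?n"
  proof (rule eq_vecI)
    fix i assume "i < dim_vec (0\<^sub>v ?n :: real vec)"
    then have i: "i < ?n" by simp
    have "grp \<alpha> i < ?k" using grp_prop[OF i] by blast
    then show "v $ i = 0\<^sub>v ?n $ i" using vt[OF i] Z[of ?k] i by simp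
  qed (use v(1) in simp)
  then show False using v(2) by simp
qed

end


theorem theorem3p1:
  fixes \<alpha> :: "nat list"
  assumes "even (length \<alpha>)" and "length \<alpha> \<ge> 2" and "\<forall>a \<in> set \<alpha>. a > 0"
  shows "length \<alpha> \<le> num_distinct_lap_eigs (num_vertices \<alpha>) (C_graph_adj \<alpha>)
       \<and> num_distinct_lap_eigs (num_vertices \<alpha>) (C_graph_adj \<alpha>) \<le> 2 * length \<alpha> - 1"
proof -
  let ?k = "length \<alpha>"
  let ?EV = "{x. eigenvalue (laplacian (sum_list \<alpha>) (C_graph_adj \<alpha>)) x}"
  let ?S = "insert 0 (lam \<alpha> ` {1..<?k} \<union> Dg \<alpha> ` {1..<?k})"
  have N: "num_distinct_lap_eigs (num_vertices \<alpha>) (C_graph_adj \<alpha>) = card ?EV"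
    by (simp add: num_distinct_lap_eigs_def num_vertices_def)
  have sub: "?EV \<subseteq> ?S" using upper[OF assms] by blast
  have fS: "finite ?S" by simp
  have fE: "finite ?EV" using finite_subset[OF sub fS] .
  have c1: "card ?S \<le> Suc (card (lam \<alpha> ` {1..<?k} \<union> Dg \<alpha> ` {1..<?k}))" by (rule card_insert_le_m1) simp_all
  have c2: "card (lam \<alpha> ` {1..<?k} \<union> Dg \<alpha> ` {1..<?k}) \<le> card (lam \<alpha> ` {1..<?k}) + card (Dg \<alpha> ` {1..<?k})"
    by (rule card_Un_le)
  have c3: "card (lam \<alpha> ` {1..<?k}) \<le> ?k - 1" using card_image_le[of "{1..<?k}" "lam \<alpha>"] by simp
  have c4: "card (Dg \<alpha> ` {1..<?k}) \<le> ?k - 1" using card_image_le[of "{1..<?k}" "Dg \<alpha>"] by simp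
  have cS: "card ?S \<le> 2 * ?k - 1" using c1 c2 c3 c4 assms(2) by linarith
  have up: "card ?EV \<le> 2 * ?k - 1" using card_mono[OF fS sub] cS by simp
  have sub2: "insert 0 (lam \<alpha> ` {1..<?k}) \<subseteq> ?EV"
    using lower_0[OF assms] lower_lam[OF assms] by auto
  have "0 \<notin> lam \<alpha> ` {1..<?k}" using lam_pos[OF assms] by force
  then have "card (insert 0 (lam \<alpha> ` {1..<?k})) = ?k"
    using card_image[OF lam_inj[OF assms]] assms(2) by simp
  then have lo: "?k \<le> card ?EV" using card_mono[OF fE sub2] by simp
  show ?thesis using N up lo by simp
qed

end
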